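(* Let $A$ be a normed vector space over $\mathbb C$ with $A^\vee$ given the dual norm. On $\mathrm{Max}\,A$, the topology consisting of the sets $\{V\in\mathrm{Max}\,A:F(V)\in\mathcal U\}$, with $\mathcal U\subset\mathrm{Sub}\,A^\vee$ open in the lower Vietoris topology of $A^\vee$, is finer than the topology generated by the sets $\mathbf U_r(a)=\{V\in\mathrm{Max}\,A: d(a,V)>r\}$, $a\in A$, $r>0$.
   Context: $\mathrm{Max}\,A$ is the set of closed subspaces of $A$; $A^\vee$ the continuous dual; $F(V)=\{\phi\in A^\vee:\phi|_V=0\}$. The lower Vietoris topology on the set $\mathrm{Sub}\,A^\vee$ of subspaces of $A^\vee$ is generated by $\{\mathcal V:\mathcal V\cap\mathcal O\ne\emptyset\}$, $\mathcal O\subset A^\vee$ norm-open. *)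

theory Defs
  imports "HOL-Analysis.Analysis"
begin

class cnormed_vector = real_normed_vector +
  fixes scaleC :: "complex \<Rightarrow> 'a \<Rightarrow> 'a"
  assumes scaleC_add_right: "scaleC c (x + y) = scaleC c x + scaleC c y"
    and scaleC_add_left: "scaleC (b + c) x = scaleC b x + scaleC c x"
    and scaleC_scaleC: "scaleC b (scaleC c x) = scaleC (b * c) x"
    and scaleC_of_real: "scaleC (complex_of_real r) x = scaleR r x"
    and norm_scaleC: "norm (scaleC c x) = cmod c * norm x"

definition csubspace :: "'a::cnormed_vector set \<Rightarrow> bool" where
  "csubspace S \<longleftrightarrow> 0 \<in> S \<and> (\<forall>x\<in>S. \<forall>y\<in>S. x + y \<in> S) \<and> (\<forall>c. \<forall>x\<in>S. scaleC c x \<in> S)"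

definition MaxA :: "'a::cnormed_vector set set" where
  "MaxA = {V. csubspace V \<and> closed V}"

definition cdual :: "('a::cnormed_vector \<Rightarrow> complex) set" where
  "cdual = {f. (\<forall>x y. f (x + y) = f x + f y) \<and> (\<forall>c x. f (scaleC c x) = c * f x)
              \<and> (\<exists>K. \<forall>x. cmod (f x) \<le> K * norm x)}"

definition dual_open :: "('a::cnormed_vector \<Rightarrow> complex) set \<Rightarrow> bool" where
  "dual_open Q \<longleftrightarrow> Q \<subseteq> cdual \<and>
     (\<forall>\<phi>\<in>Q. \<exists>e>0. \<forall>\<psi>\<in>cdual. onorm (\<lambda>x. \<psi> x - \<phi> x) < e \<longrightarrow> \<psi> \<in> Q)"

definition SubDual :: "('a::cnormed_vector \<Rightarrow> complex) set set" where
  "SubDual = {S. S \<subseteq> cdual \<and> (\<lambda>x. 0) \<in> S \<and> (\<forall>f\<in>S. \<forall>g\<in>S. (\<lambda>x. f x + g x) \<in> S)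
                 \<and> (\<forall>c. \<forall>f\<in>S. (\<lambda>x. c * f x) \<in> S)}"

text \<open>Subbasis of the lower Vietoris topology on Sub A^\<or> (the whole space is included
  to account for the empty finite intersection).\<close>
definition lower_vietoris_subbasis :: "('a::cnormed_vector \<Rightarrow> complex) set set set" where
  "lower_vietoris_subbasis =
     insert SubDual {{\<V> \<in> SubDual. \<V> \<inter> Q \<noteq> {}} | Q. dual_open Q}"

definition lower_vietoris_open :: "('a::cnormed_vector \<Rightarrow> complex) set set \<Rightarrow> bool" where
  "lower_vietoris_open \<U> \<longleftrightarrow> generate_topology_on lower_vietoris_subbasis \<U>"

definition annih :: "'a::cnormed_vector set \<Rightarrow> ('a \<Rightarrow> complex) set" where
  "annih V = {\<phi> \<in> cdual. \<forall>v\<in>V. \<phi> v = 0}"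

definition Ur :: "real \<Rightarrow> 'a::cnormed_vector \<Rightarrow> 'a set set" where
  "Ur r a = {V \<in> MaxA. infdist a V > r}"

definition dist_topology_open :: "'a::cnormed_vector set set \<Rightarrow> bool" where
  "dist_topology_open W \<longleftrightarrow>
     generate_topology_on (insert MaxA {Ur r a | r a. r > 0}) W"

definition F_topology_open :: "'a::cnormed_vector set set \<Rightarrow> bool" where
  "F_topology_open W \<longleftrightarrow> (\<exists>\<U>. lower_vietoris_open \<U> \<and> W = {V \<in> MaxA. annih V \<in> \<U>})"

end

theory Submission
  imports Defs
begin

definition lin_graph :: "('a::real_normed_vector \<times> real) set \<Rightarrow> bool" where
  "lin_graph G \<longleftrightarrow> (\<forall>x s t. (x,s)\<in>G \<longrightarrow> (x,t)\<in>G \<longrightarrow> s=t)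
    \<and> (\<forall>x s y t. (x,s)\<in>G \<longrightarrow> (y,t)\<in>G \<longrightarrow> (x+y,s+t)\<in>G)
    \<and> (\<forall>c x s. (x,s)\<in>G \<longrightarrow> (c *\<^sub>R x, c * s)\<in>G)
    \<and> (\<forall>x s. (x,s)\<in>G \<longrightarrow> s \<le> norm x)"

lemma lin_graphD:
  assumes "lin_graph G"
  shows "\<And>x s t. (x,s)\<in>G \<Longrightarrow> (x,t)\<in>G \<Longrightarrow> s=t"
    and "\<And>x s y t. (x,s)\<in>G \<Longrightarrow> (y,t)\<in>G \<Longrightarrow> (x+y,s+t)\<in>G"
    and "\<And>c x s. (x,s)\<in>G \<Longrightarrow> (c *\<^sub>R x, c * s)\<in>G"
    and "\<And>x s. (x,s)\<in>G \<Longrightarrow> s \<le> norm x"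
  using assms unfolding lin_graph_def by blast+

lemma lin_graph_chain:
  assumes C: "C \<in> chains {G. lin_graph G \<and> G0 \<subseteq> G}" and ne: "C \<noteq> {}"
  shows "lin_graph (\<Union>C) \<and> G0 \<subseteq> \<Union>C"
proof -
  have sub: "\<And>G. G \<in> C \<Longrightarrow> lin_graph G \<and> G0 \<subseteq> G" using chainsD2[OF C] by blast
  have two: "\<And>p q. p \<in> \<Union>C \<Longrightarrow> q \<in> \<Union>C \<Longrightarrow> \<exists>G\<in>C. p \<in> G \<and> q \<in> G"
    using chainsD[OF C] by blast
  show ?thesis
    unfolding lin_graph_def
  proof (intro conjI allI impI)
    fix x s t assume "(x,s)\<in>\<Union>C" "(x,t)\<in>\<Union>C"
    then obtain G where "G\<in>C" "(x,s)\<in>G" "(x,t)\<in>G" using two by blast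
    then show "s = t" using sub unfolding lin_graph_def by blast
  next
    fix x s y t assume "(x,s)\<in>\<Union>C" "(y,t)\<in>\<Union>C"
    then obtain G where "G\<in>C" "(x,s)\<in>G" "(y,t)\<in>G" using two by blast
    then show "(x+y,s+t) \<in> \<Union>C" using sub unfolding lin_graph_def by blast
  next
    fix c x s assume "(x,s)\<in>\<Union>C"
    then obtain G where "G\<in>C" "(x,s)\<in>G" by blast
    then show "(c *\<^sub>R x, c * s) \<in> \<Union>C" using sub unfolding lin_graph_def by blast
  next
    fix x s assume "(x,s)\<in>\<Union>C"
    then obtain G where "G\<in>C" "(x,s)\<in>G" by blast
    then show "s \<le> norm x" using sub unfolding lin_graph_def by blast
  next
    show "G0 \<subseteq> \<Union>C" using sub ne by blast
  qed
qed

lemma lin_graph_extend: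
  fixes M :: "('a::real_normed_vector \<times> real) set"
  assumes L: "lin_graph M" and ne: "M \<noteq> {}" and x0: "x0 \<notin> Domain M"
  shows "\<exists>M'. lin_graph M' \<and> M \<subseteq> M' \<and> M' \<noteq> M"
proof -
  have fn: "\<And>x s t. (x,s)\<in>M \<Longrightarrow> (x,t)\<in>M \<Longrightarrow> s=t"
    and add: "\<And>x s y t. (x,s)\<in>M \<Longrightarrow> (y,t)\<in>M \<Longrightarrow> (x+y,s+t)\<in>M"
    and scl: "\<And>c x s. (x,s)\<in>M \<Longrightarrow> (c *\<^sub>R x, c * s)\<in>M"
    and bnd: "\<And>x s. (x,s)\<in>M \<Longrightarrow> s \<le> norm x"
    using L unfolding lin_graph_def by blast+
  obtain p where "p \<in> M" using ne by blast
  then have z: "(0,0) \<in> M" using scl[of "fst p" "snd p" 0] by auto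
  define S where "S = {s - norm (y - x0) | y s. (y,s)\<in>M}"
  define c where "c = Sup S"
  have key: "s - norm (y - x0) \<le> norm (z + x0) - t" if "(y,s)\<in>M" "(z,t)\<in>M" for y s z t
  proof -
    have "s + t \<le> norm (y + z)" using bnd add that by blast
    also have "norm (y + z) \<le> norm (y - x0) + norm (z + x0)"
      using norm_triangle_ineq[of "y - x0" "z + x0"] by simp
    finally show ?thesis by simp
  qed
  have Sne: "S \<noteq> {}" using z unfolding S_def by blast
  have Sbdd: "bdd_above S"
  proof (rule bdd_aboveI[of S "norm x0"])
    fix w assume "w \<in> S"
    then obtain y s where ys: "(y,s)\<in>M" "w = s - norm (y - x0)" unfolding S_def by blast
    show "w \<le> norm x0" using key[OF ys(1) z] ys(2) by simp
  qed
  have cup: "s - norm (y - x0) \<le> c" if "(y,s)\<in>M" for y s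
  proof -
    have "s - norm (y - x0) \<in> S" unfolding S_def using that by blast
    then show ?thesis unfolding c_def by (rule cSup_upper[OF _ Sbdd])
  qed
  have clo: "c \<le> norm (z + x0) - t" if "(z,t)\<in>M" for z t
    unfolding c_def
  proof (rule cSup_least[OF Sne])
    fix w assume "w \<in> S"
    then obtain y s where ys: "(y,s)\<in>M" "w = s - norm (y - x0)" unfolding S_def by blast
    show "w \<le> norm (z + x0) - t" using key[OF ys(1) that] ys(2) by simp
  qed
  define M' where "M' = {(y + t *\<^sub>R x0, s + t*c) | y s t. (y,s)\<in>M}"
  have mI: "(y + t *\<^sub>R x0, s + t*c) \<in> M'" if "(y,s)\<in>M" for y s t
    unfolding M'_def using that by blast
  have mD: "\<exists>y s t. (y,s)\<in>M \<and> x = y + t *\<^sub>R x0 \<and> r = s + t*c" if "(x,r)\<in>M'" for x r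
    using that unfolding M'_def by blast
  have "lin_graph M'"
    unfolding lin_graph_def
  proof (intro conjI allI impI)
    fix x s t assume a1: "(x,s)\<in>M'" and a2: "(x,t)\<in>M'"
    obtain y1 s1 t1 where h1: "(y1,s1)\<in>M" "x = y1 + t1 *\<^sub>R x0" "s = s1 + t1*c"
      using mD[OF a1] by blast
    obtain y2 s2 t2 where h2: "(y2,s2)\<in>M" "x = y2 + t2 *\<^sub>R x0" "t = s2 + t2*c"
      using mD[OF a2] by blast
    have e: "y1 + t1 *\<^sub>R x0 = y2 + t2 *\<^sub>R x0" using h1(2) h2(2) by simp
    have t12: "t1 = t2"
    proof (rule ccontr)
      assume ne: "t1 \<noteq> t2"
      have "(y1 + (-1) *\<^sub>R y2, s1 + (-1)* s2) \<in> M" by (rule add[OF h1(1) scl[OF h2(1)]])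
      then have "(y1 - y2, s1 - s2) \<in> M" by simp
      then have "((1/(t2-t1)) *\<^sub>R (y1 - y2), (1/(t2-t1))*(s1 - s2)) \<in> M" by (rule scl)
      moreover have "(1/(t2-t1)) *\<^sub>R (y1 - y2) = x0"
      proof -
        have "y1 - y2 = (t2 - t1) *\<^sub>R x0" using e by (simp add: algebra_simps)
        then show ?thesis using ne by simp
      qed
      ultimately have "x0 \<in> Domain M" by (metis Domain.DomainI)
      then show False using x0 by contradiction
    qed
    then have "y1 = y2" using e by simp
    then have "s1 = s2" using h1(1) h2(1) fn by blast
    then show "s = t" using h1(3) h2(3) t12 by simp
  next
    fix x s y t assume a1: "(x,s)\<in>M'" and a2: "(y,t)\<in>M'"
    obtain y1 s1 t1 where h1: "(y1,s1)\<in>M" "x = y1 + t1 *\<^sub>R x0" "s = s1 + t1*c"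
      using mD[OF a1] by blast
    obtain y2 s2 t2 where h2: "(y2,s2)\<in>M" "y = y2 + t2 *\<^sub>R x0" "t = s2 + t2*c"
      using mD[OF a2] by blast
    have "((y1+y2) + (t1+t2) *\<^sub>R x0, (s1+s2) + (t1+t2)*c) \<in> M'"
      by (rule mI[OF add[OF h1(1) h2(1)]])
    moreover have "x + y = (y1+y2) + (t1+t2) *\<^sub>R x0" "s + t = (s1+s2) + (t1+t2)*c"
      using h1 h2 by (simp_all add: algebra_simps)
    ultimately show "(x+y, s+t) \<in> M'" by simp
  next
    fix a x s assume a1: "(x,s)\<in>M'"
    obtain y1 s1 t1 where h: "(y1,s1)\<in>M" "x = y1 + t1 *\<^sub>R x0" "s = s1 + t1*c"
      using mD[OF a1] by blast
    have "(a *\<^sub>R y1 + (a*t1) *\<^sub>R x0, a* s1 + (a*t1)*c) \<in> M'" by (rule mI[OF scl[OF h(1)]])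
    moreover have "a *\<^sub>R x = a *\<^sub>R y1 + (a*t1) *\<^sub>R x0" "a * s = a* s1 + (a*t1)*c"
      using h by (simp_all add: algebra_simps)
    ultimately show "(a *\<^sub>R x, a* s) \<in> M'" by simp
  next
    fix x s assume a1: "(x,s)\<in>M'"
    obtain y s1 t where h: "(y,s1)\<in>M" "x = y + t *\<^sub>R x0" "s = s1 + t*c"
      using mD[OF a1] by blast
    consider "t = 0" | "t > 0" | "t < 0" by linarith
    then show "s \<le> norm x"
    proof cases
      case 1 then show ?thesis using h bnd by simp
    next
      case 2
      define w where "w = (1/t) *\<^sub>R y + x0"
      have tw: "t *\<^sub>R w = x" using 2 h unfolding w_def by (simp add: algebra_simps)
      have "((1/t) *\<^sub>R y, (1/t)* s1) \<in> M" by (rule scl[OF h(1)])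
      from clo[OF this] have "c \<le> norm w - (1/t)* s1" unfolding w_def .
      then have "t * c \<le> t * (norm w - (1/t)* s1)" using 2 by (simp add: mult_left_mono)
      also have "\<dots> = t * norm w - s1" using 2 by (simp add: right_diff_distrib)
      also have "t * norm w = norm x" using 2 tw by (metis norm_scaleR abs_of_pos)
      finally show ?thesis using h by simp
    next
      case 3
      define u where "u = -t"
      have u: "u > 0" using 3 u_def by simp
      define w where "w = (1/u) *\<^sub>R y - x0"
      have uw: "u *\<^sub>R w = x" using u h unfolding w_def u_def by (simp add: algebra_simps)
      have "((1/u) *\<^sub>R y, (1/u)* s1) \<in> M" by (rule scl[OF h(1)])
      from cup[OF this] have "(1/u)* s1 - norm w \<le> c" unfolding w_def .
      then have "u * ((1/u)* s1 - norm w) \<le> u * c" using u by (simp add: mult_left_mono)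
      moreover have "u * ((1/u)* s1 - norm w) = s1 - u * norm w" using u by (simp add: right_diff_distrib)
      moreover have "u * norm w = norm x" using u uw by (metis norm_scaleR abs_of_pos)
      ultimately show ?thesis using h u_def by simp
    qed
  qed
  moreover have "M \<subseteq> M'"
  proof
    fix p assume p: "p \<in> M"
    have "(fst p + 0 *\<^sub>R x0, snd p + 0 * c) \<in> M'" using p by (intro mI) simp
    then show "p \<in> M'" by simp
  qed
  moreover have "(x0, c) \<in> M'"
  proof -
    have "(0 + 1 *\<^sub>R x0, 0 + 1 * c) \<in> M'" by (rule mI[OF z])
    then show ?thesis by simp
  qed
  then have "M' \<noteq> M" using x0 by blast
  ultimately show ?thesis by blast
qed

lemma real_hb:
  fixes G0 :: "('a::real_normed_vector \<times> real) set"
  assumes L0: "lin_graph G0" and ne: "G0 \<noteq> {}"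
  shows "\<exists>u. (\<forall>x y. u (x+y) = u x + u y) \<and> (\<forall>c x. u (c *\<^sub>R x) = c * u x)
             \<and> (\<forall>x. u x \<le> norm x) \<and> (\<forall>x s. (x,s)\<in>G0 \<longrightarrow> u x = s)"
proof -
  let ?A = "{G. lin_graph G \<and> G0 \<subseteq> G}"
  have "\<forall>C\<in>chains ?A. \<exists>U\<in>?A. \<forall>X\<in>C. X \<subseteq> U"
  proof
    fix C assume C: "C \<in> chains ?A"
    show "\<exists>U\<in>?A. \<forall>X\<in>C. X \<subseteq> U"
    proof (cases "C = {}")
      case True then show ?thesis using L0 by (intro bexI[of _ G0]) auto
    next
      case False
      from lin_graph_chain[OF C False] have "\<Union>C \<in> ?A" by simp
      then show ?thesis by (intro bexI[of _ "\<Union>C"]) auto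
    qed
  qed
  from Zorn_Lemma2[OF this] obtain M where M: "M \<in> ?A" and mx0: "\<forall>X\<in>?A. M \<subseteq> X \<longrightarrow> X = M"
    by (rule bexE)
  have mx: "\<And>X. X\<in>?A \<Longrightarrow> M \<subseteq> X \<Longrightarrow> X = M" using mx0 by simp
  have LM: "lin_graph M" and G0M: "G0 \<subseteq> M" using M by auto
  have Mne: "M \<noteq> {}" using G0M ne by blast
  have dom: "x \<in> Domain M" for x
  proof (rule ccontr)
    assume "x \<notin> Domain M"
    from lin_graph_extend[OF LM Mne this] obtain M' where "lin_graph M'" "M \<subseteq> M'" "M' \<noteq> M" by blast
    then have "M' \<in> ?A" using G0M by blast
    then show False using mx \<open>M \<subseteq> M'\<close> \<open>M' \<noteq> M\<close> by blast
  qed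
  have fn: "\<And>x s t. (x,s)\<in>M \<Longrightarrow> (x,t)\<in>M \<Longrightarrow> s=t"
    and add: "\<And>x s y t. (x,s)\<in>M \<Longrightarrow> (y,t)\<in>M \<Longrightarrow> (x+y,s+t)\<in>M"
    and scl: "\<And>c x s. (x,s)\<in>M \<Longrightarrow> (c *\<^sub>R x, c * s)\<in>M"
    and bnd: "\<And>x s. (x,s)\<in>M \<Longrightarrow> s \<le> norm x"
    using lin_graphD[OF LM] by blast+
  define u where "u x = (THE s. (x,s)\<in>M)" for x
  have uM: "(x, u x) \<in> M" for x
  proof -
    obtain s where xs: "(x,s)\<in>M" using dom[of x] by blast
    have "(THE s'. (x,s')\<in>M) = s"
      by (rule the_equality) (use xs fn in auto)
    then show ?thesis unfolding u_def using xs by simp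
  qed
  have ueq: "(x,s)\<in>M \<Longrightarrow> u x = s" for x s using fn[OF uM[of x]] by simp
  show ?thesis
  proof (intro exI[of _ u] conjI allI impI)
    fix x y show "u (x+y) = u x + u y" by (rule ueq[OF add[OF uM uM]])
  next
    fix c x show "u (c *\<^sub>R x) = c * u x" by (rule ueq[OF scl[OF uM]])
  next
    fix x show "u x \<le> norm x" by (rule bnd[OF uM])
  next
    fix x s assume "(x,s) \<in> G0" then show "u x = s" using G0M by (intro ueq) blast
  qed
qed


lemma scaleC_zero_left [simp]: "scaleC 0 (x::'a::cnormed_vector) = 0"
  using scaleC_of_real[of 0 x] by simp
lemma scaleC_one [simp]: "scaleC 1 (x::'a::cnormed_vector) = x"
  using scaleC_of_real[of 1 x] by simp
lemma scaleC_minus_one: "scaleC (-1) (x::'a::cnormed_vector) = - x"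
  using scaleC_of_real[of "-1" x] by simp
lemma scaleC_zero_right [simp]: "scaleC c (0::'a::cnormed_vector) = 0"
  using scaleC_add_right[of c 0 0] by simp
lemma scaleC_minus_right: "scaleC c (- x::'a::cnormed_vector) = - scaleC c x"
proof -
  have "scaleC c x + scaleC c (-x) = 0" using scaleC_add_right[of c x "-x"] by simp
  then show ?thesis by (metis minus_unique)
qed
lemma scaleC_diff_right: "scaleC c (x - y::'a::cnormed_vector) = scaleC c x - scaleC c y"
  using scaleC_add_right[of c x "-y"] by (simp add: scaleC_minus_right)
lemma scaleC_minus_left: "scaleC (-c) (x::'a::cnormed_vector) = - scaleC c x"
  using scaleC_scaleC[of "-1" c x] by (simp add: scaleC_minus_one)
lemma scaleC_diff_left: "scaleC (b - c) (x::'a::cnormed_vector) = scaleC b x - scaleC c x"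
  using scaleC_add_left[of b "-c" x] by (simp add: scaleC_minus_left)
lemma scaleR_scaleC: "r *\<^sub>R scaleC c (x::'a::cnormed_vector) = scaleC (of_real r * c) x"
  by (metis scaleC_of_real scaleC_scaleC)
lemma scaleC_decomp: "scaleC c (x::'a::cnormed_vector) = Re c *\<^sub>R x + Im c *\<^sub>R scaleC \<i> x"
proof -
  have "c = complex_of_real (Re c) + complex_of_real (Im c) * \<i>" by (simp add: complex_eq_iff)
  then have "scaleC c x = scaleC (complex_of_real (Re c)) x + scaleC (complex_of_real (Im c) * \<i>) x"
    by (metis scaleC_add_left)
  also have "\<dots> = Re c *\<^sub>R x + Im c *\<^sub>R scaleC \<i> x"
    by (simp add: scaleC_of_real scaleR_scaleC)
  finally show ?thesis .
qed

lemma csubspace_scaleR: "csubspace V \<Longrightarrow> v \<in> V \<Longrightarrow> r *\<^sub>R v \<in> V"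
  unfolding csubspace_def by (metis scaleC_of_real)
lemma csubspace_minus: "csubspace V \<Longrightarrow> v \<in> V \<Longrightarrow> - v \<in> V"
  unfolding csubspace_def by (metis scaleC_minus_one)

lemma cdual_bl: assumes "f \<in> cdual" shows "bounded_linear f"
proof -
  have add: "\<And>x y. f (x + y) = f x + f y" and sc: "\<And>c x. f (scaleC c x) = c * f x"
    and "\<exists>K. \<forall>x. cmod (f x) \<le> K * norm x" using assms unfolding cdual_def by auto
  then obtain K where K: "\<And>x. cmod (f x) \<le> K * norm x" by blast
  show ?thesis
  proof (rule bounded_linear_intro[of f K])
    fix x y show "f (x + y) = f x + f y" by (rule add)
  next
    fix r x show "f (r *\<^sub>R x) = r *\<^sub>R f x"
      using sc[of "complex_of_real r" x] by (simp add: scaleC_of_real scaleR_conv_of_real)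
  next
    fix x show "norm (f x) \<le> norm x * K" using K[of x] by (simp add: mult.commute)
  qed
qed

lemma cdual_zero: "(\<lambda>x. 0) \<in> cdual"
  unfolding cdual_def by (auto intro: exI[of _ 0])

lemma cdual_add: assumes f: "f \<in> cdual" and g: "g \<in> cdual" shows "(\<lambda>x. f x + g x) \<in> cdual"
proof -
  from f obtain K where K: "\<And>x. cmod (f x) \<le> K * norm x" unfolding cdual_def by auto
  from g obtain L where L: "\<And>x. cmod (g x) \<le> L * norm x" unfolding cdual_def by auto
  have "cmod (f x + g x) \<le> (K + L) * norm x" for x
    using norm_triangle_ineq[of "f x" "g x"] K[of x] L[of x] by (simp add: distrib_right)
  then have B: "\<exists>M. \<forall>x. cmod (f x + g x) \<le> M * norm x" by blast
  have "\<forall>x y. f (x + y) + g (x + y) = (f x + g x) + (f y + g y)" using f g unfolding cdual_def by simp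
  moreover have "\<forall>c x. f (scaleC c x) + g (scaleC c x) = c * (f x + g x)"
    using f g unfolding cdual_def by (simp add: distrib_left)
  ultimately show ?thesis using B unfolding cdual_def by simp
qed

lemma cdual_scale: assumes f: "f \<in> cdual" shows "(\<lambda>x. c * f x) \<in> cdual"
proof -
  from f obtain K where K: "\<And>x. cmod (f x) \<le> K * norm x" unfolding cdual_def by auto
  have "cmod (c * f x) \<le> (cmod c * K) * norm x" for x
    using K[of x] by (simp add: norm_mult mult.assoc mult_left_mono)
  then have B: "\<exists>M. \<forall>x. cmod (c * f x) \<le> M * norm x" by blast
  have "\<forall>x y. c * f (x + y) = c * f x + c * f y" using f unfolding cdual_def by (simp add: distrib_left)
  moreover have "\<forall>d x. c * f (scaleC d x) = d * (c * f x)"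
    using f unfolding cdual_def by simp
  ultimately show ?thesis using B unfolding cdual_def by simp
qed

lemma annih_SubDual: "annih V \<in> SubDual"
  unfolding SubDual_def annih_def
  using cdual_zero cdual_add cdual_scale by auto


lemma hb_dist:
  fixes V :: "'a::cnormed_vector set" and a :: 'a
  assumes V: "csubspace V" and dpos: "infdist a V > 0"
  shows "\<exists>\<phi>\<in>cdual. (\<forall>v\<in>V. \<phi> v = 0) \<and> \<phi> a = complex_of_real (infdist a V) \<and> (\<forall>x. cmod (\<phi> x) \<le> norm x)"
proof -
  define d where "d = infdist a V"
  have d0: "d > 0" using dpos d_def by simp
  have V0: "0 \<in> V" and Vadd: "\<And>x y. x\<in>V \<Longrightarrow> y\<in>V \<Longrightarrow> x+y\<in>V"
    and Vsc: "\<And>c x. x\<in>V \<Longrightarrow> scaleC c x \<in> V" using V unfolding csubspace_def by auto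
  have aV: "a \<notin> V" using dpos by (auto simp: infdist_zero)
  define G0 where "G0 = {(v + scaleC l a, Re l * d) | v l. v \<in> V}"
  have mI: "(v + scaleC l a, Re l * d) \<in> G0" if "v \<in> V" for v l
    unfolding G0_def using that by blast
  have mD: "\<exists>v l. v\<in>V \<and> x = v + scaleC l a \<and> s = Re l * d" if "(x,s)\<in>G0" for x s
    using that unfolding G0_def by blast
  have uniq: "l1 = l2" if v1: "v1\<in>V" and v2: "v2\<in>V" and e: "v1 + scaleC l1 a = v2 + scaleC l2 a" for v1 v2 l1 l2
  proof (rule ccontr)
    assume ne: "l1 \<noteq> l2"
    have "scaleC (l1 - l2) a = v2 - v1" using e by (simp add: scaleC_diff_left algebra_simps)
    then have "scaleC (1/(l1-l2)) (scaleC (l1 - l2) a) = scaleC (1/(l1-l2)) (v2 - v1)" by simp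
    then have aeq: "a = scaleC (1/(l1-l2)) (v2 - v1)" using ne by (simp add: scaleC_scaleC)
    have "v2 - v1 \<in> V" using Vadd[OF v2 csubspace_minus[OF V v1]] by simp
    then have "scaleC (1/(l1-l2)) (v2 - v1) \<in> V" by (rule Vsc)
    then show False using aV aeq by simp
  qed
  have bound: "Re l * d \<le> norm (v + scaleC l a)" if v: "v\<in>V" for v l
  proof (cases "l = 0")
    case True then show ?thesis by simp
  next
    case False
    define w where "w = scaleC (-(1/l)) v"
    have wV: "w \<in> V" unfolding w_def using Vsc v by blast
    have "d \<le> dist a w" unfolding d_def by (rule infdist_le[OF wV])
    then have dl: "d \<le> norm (a - w)" by (simp add: dist_norm)
    have "scaleC l (a - w) = scaleC l a - scaleC (l * (-(1/l))) v"
      unfolding w_def by (simp add: scaleC_diff_right scaleC_scaleC)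
    also have "l * (-(1/l)) = -1" using False by simp
    finally have eq: "scaleC l (a - w) = v + scaleC l a" by (simp add: scaleC_minus_one)
    have "norm (v + scaleC l a) = norm (scaleC l (a - w))" by (simp only: eq)
    also have "\<dots> = cmod l * norm (a - w)" by (rule norm_scaleC)
    finally have "norm (v + scaleC l a) = cmod l * norm (a - w)" .
    moreover have "Re l * d \<le> cmod l * d" using d0 by (simp add: mult_right_mono complex_Re_le_cmod)
    moreover have "cmod l * d \<le> cmod l * norm (a - w)" using dl by (simp add: mult_left_mono)
    ultimately show ?thesis by linarith
  qed
  have LG: "lin_graph G0"
    unfolding lin_graph_def
  proof (intro conjI allI impI)
    fix x s t assume a1: "(x,s)\<in>G0" and a2: "(x,t)\<in>G0"
    obtain v1 l1 where h1: "v1\<in>V" "x = v1 + scaleC l1 a" "s = Re l1 * d" using mD[OF a1] by blast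
    obtain v2 l2 where h2: "v2\<in>V" "x = v2 + scaleC l2 a" "t = Re l2 * d" using mD[OF a2] by blast
    have "l1 = l2" using uniq[OF h1(1) h2(1)] h1(2) h2(2) by simp
    then show "s = t" using h1 h2 by simp
  next
    fix x s y t assume a1: "(x,s)\<in>G0" and a2: "(y,t)\<in>G0"
    obtain v1 l1 where h1: "v1\<in>V" "x = v1 + scaleC l1 a" "s = Re l1 * d" using mD[OF a1] by blast
    obtain v2 l2 where h2: "v2\<in>V" "y = v2 + scaleC l2 a" "t = Re l2 * d" using mD[OF a2] by blast
    have "((v1+v2) + scaleC (l1+l2) a, Re (l1+l2) * d) \<in> G0" by (rule mI[OF Vadd[OF h1(1) h2(1)]])
    moreover have "x + y = (v1+v2) + scaleC (l1+l2) a" using h1 h2 by (simp add: scaleC_add_left algebra_simps)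
    moreover have "s + t = Re (l1+l2) * d" using h1 h2 by (simp add: algebra_simps)
    ultimately show "(x+y, s+t) \<in> G0" by simp
  next
    fix c x s assume a1: "(x,s)\<in>G0"
    obtain v l where h: "v\<in>V" "x = v + scaleC l a" "s = Re l * d" using mD[OF a1] by blast
    have m: "(c *\<^sub>R v + scaleC (complex_of_real c * l) a, Re (complex_of_real c * l) * d) \<in> G0"
      by (rule mI[OF csubspace_scaleR[OF V h(1)]])
    have e1: "c *\<^sub>R x = c *\<^sub>R v + scaleC (complex_of_real c * l) a"
      using h by (simp add: scaleR_scaleC scaleR_add_right)
    have e2: "c * s = Re (complex_of_real c * l) * d" using h by simp
    show "(c *\<^sub>R x, c * s) \<in> G0" unfolding e1 e2 by (rule m)
  next
    fix x s assume a1: "(x,s)\<in>G0"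
    obtain v l where h: "v\<in>V" "x = v + scaleC l a" "s = Re l * d" using mD[OF a1] by blast
    show "s \<le> norm x" using bound[OF h(1), of l] h by simp
  qed
  have "(0 + scaleC 0 a, Re 0 * d) \<in> G0" by (rule mI[OF V0])
  then have G0ne: "G0 \<noteq> {}" by blast
  from real_hb[OF LG G0ne] obtain u where U: "(\<forall>x y. u (x+y) = u x + u y) \<and> (\<forall>c x. u (c *\<^sub>R x) = c * u x)
             \<and> (\<forall>x. u x \<le> norm x) \<and> (\<forall>x s. (x,s)\<in>G0 \<longrightarrow> u x = s)" by (rule exE)
  have uadd: "\<And>x y. u (x+y) = u x + u y" using U by simp
  have usc: "\<And>c x. u (c *\<^sub>R x) = c * u x" using U by simp
  have ule: "\<And>x. u x \<le> norm x" using U by simp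
  have uG: "\<And>x s. (x,s)\<in>G0 \<Longrightarrow> u x = s" using U by simp
  have uV: "u v = 0" if "v \<in> V" for v
    using uG[OF mI[OF that, of 0]] by simp
  have ua: "u a = d" using uG[OF mI[OF V0, of 1]] by simp
  have uia: "u (scaleC \<i> a) = 0" using uG[OF mI[OF V0, of \<i>]] by simp
  have uC: "u (scaleC c x) = Re c * u x + Im c * u (scaleC \<i> x)" for c x
    using scaleC_decomp[of c x] by (simp add: uadd usc)
  define \<phi> where "\<phi> x = Complex (u x) (- u (scaleC \<i> x))" for x
  have phiRe: "Re (\<phi> x) = u x" for x unfolding \<phi>_def by simp
  have phiadd: "\<phi> (x + y) = \<phi> x + \<phi> y" for x y
    unfolding \<phi>_def by (simp add: uadd scaleC_add_right complex_eq_iff)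
  have phisc: "\<phi> (scaleC c x) = c * \<phi> x" for c x
  proof -
    have "u (scaleC \<i> (scaleC c x)) = Re (\<i> * c) * u x + Im (\<i> * c) * u (scaleC \<i> x)"
      by (subst scaleC_scaleC) (rule uC)
    then have "u (scaleC \<i> (scaleC c x)) = - Im c * u x + Re c * u (scaleC \<i> x)" by simp
    then show ?thesis unfolding \<phi>_def using uC[of c x] by (simp add: complex_eq_iff algebra_simps)
  qed
  have phib: "cmod (\<phi> x) \<le> norm x" for x
  proof (cases "\<phi> x = 0")
    case True then show ?thesis by simp
  next
    case False
    define c where "c = cnj (\<phi> x) / complex_of_real (cmod (\<phi> x))"
    have cm: "cmod (\<phi> x) > 0" using False by simp
    have "c * \<phi> x = (\<phi> x * cnj (\<phi> x)) / complex_of_real (cmod (\<phi> x))"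
      unfolding c_def by (simp add: divide_inverse ac_simps)
    also have "\<dots> = complex_of_real (cmod (\<phi> x) ^ 2) / complex_of_real (cmod (\<phi> x))"
      by (simp only: complex_norm_square)
    also have "\<dots> = complex_of_real (cmod (\<phi> x))" using cm by (simp add: power2_eq_square)
    finally have cphi: "c * \<phi> x = complex_of_real (cmod (\<phi> x))" .
    have c1: "cmod c = 1" unfolding c_def using cm by (simp add: norm_divide)
    have "cmod (\<phi> x) = Re (\<phi> (scaleC c x))" using cphi phisc by simp
    also have "\<dots> = u (scaleC c x)" by (rule phiRe)
    also have "\<dots> \<le> norm (scaleC c x)" by (rule ule)
    also have "\<dots> = norm x" using c1 by (simp add: norm_scaleC)
    finally show ?thesis .
  qed
  have "\<exists>K. \<forall>x. cmod (\<phi> x) \<le> K * norm x" using phib by (intro exI[of _ 1]) simp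
  then have "\<phi> \<in> cdual" unfolding cdual_def
    using phiadd phisc by (intro CollectI conjI allI) simp_all
  moreover have "\<forall>v\<in>V. \<phi> v = 0"
  proof
    fix v assume "v \<in> V"
    then show "\<phi> v = 0" unfolding \<phi>_def using uV Vsc by (simp add: complex_eq_iff)
  qed
  moreover have "\<phi> a = complex_of_real (infdist a V)"
    unfolding \<phi>_def using ua uia d_def by (simp add: complex_eq_iff)
  ultimately show ?thesis using phib by (intro bexI[of _ \<phi>]) simp_all
qed


definition Qset :: "real \<Rightarrow> 'a::cnormed_vector \<Rightarrow> ('a \<Rightarrow> complex) set" where
  "Qset r a = {\<phi> \<in> cdual. r * onorm \<phi> < cmod (\<phi> a)}"

lemma Qset_open:
  fixes a :: "'a::cnormed_vector"
  assumes r: "r > 0"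
  shows "dual_open (Qset r a)"
  unfolding dual_open_def
proof (intro conjI ballI)
  show "Qset r a \<subseteq> cdual" unfolding Qset_def by blast
next
  fix \<phi> assume "\<phi> \<in> Qset r a"
  then have phi: "\<phi> \<in> cdual" and lt: "r * onorm \<phi> < cmod (\<phi> a)" unfolding Qset_def by auto
  have blp: "bounded_linear \<phi>" by (rule cdual_bl[OF phi])
  define gap where "gap = cmod (\<phi> a) - r * onorm \<phi>"
  define k where "k = norm a + r"
  have k0: "k \<ge> 0" unfolding k_def using r by simp
  define e where "e = gap / (k + 1)"
  have gp: "gap > 0" unfolding gap_def using lt by simp
  have e0: "e > 0" unfolding e_def using gp k0 by simp
  have ek: "e * (k + 1) = gap" unfolding e_def using k0 by simp
  show "\<exists>e>0. \<forall>\<psi>\<in>cdual. onorm (\<lambda>x. \<psi> x - \<phi> x) < e \<longrightarrow> \<psi> \<in> Qset r a"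
  proof (intro exI[of _ e] conjI ballI impI)
    show "e > 0" by (rule e0)
  next
    fix \<psi> assume psi: "\<psi> \<in> cdual" and de: "onorm (\<lambda>x. \<psi> x - \<phi> x) < e"
    define \<delta> where "\<delta> = onorm (\<lambda>x. \<psi> x - \<phi> x)"
    have bls: "bounded_linear \<psi>" by (rule cdual_bl[OF psi])
    have bld: "bounded_linear (\<lambda>x. \<psi> x - \<phi> x)" by (rule bounded_linear_sub[OF bls blp])
    have d0: "\<delta> \<ge> 0" unfolding \<delta>_def by (rule onorm_pos_le[OF bld])
    have h1: "cmod (\<psi> a - \<phi> a) \<le> \<delta> * norm a" unfolding \<delta>_def using onorm[OF bld, of a] by simp
    have "onorm (\<lambda>x. (\<psi> x - \<phi> x) + \<phi> x) \<le> \<delta> + onorm \<phi>"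
      unfolding \<delta>_def by (rule onorm_triangle[OF bld blp])
    then have h2: "onorm \<psi> \<le> \<delta> + onorm \<phi>" by simp
    have h3: "cmod (\<phi> a) \<le> cmod (\<psi> a) + cmod (\<psi> a - \<phi> a)"
      using norm_triangle_sub[of "\<phi> a" "\<psi> a"] by (simp add: norm_minus_commute)
    have h4: "r * onorm \<psi> \<le> r * (\<delta> + onorm \<phi>)" using h2 r by (simp add: mult_left_mono)
    have h5: "\<delta> * k \<le> e * k" using de k0 unfolding \<delta>_def by (simp add: mult_right_mono)
    have h6: "e * k < e * (k + 1)" using e0 by simp
    have h7: "\<delta> * k = \<delta> * norm a + r * \<delta>" unfolding k_def by (simp add: algebra_simps)
    have h8: "r * (\<delta> + onorm \<phi>) = r * \<delta> + r * onorm \<phi>" by (simp add: algebra_simps)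
    have "r * onorm \<psi> < cmod (\<psi> a)"
      using h1 h3 h4 h5 h6 h7 h8 ek unfolding gap_def by linarith
    then show "\<psi> \<in> Qset r a" unfolding Qset_def using psi by blast
  qed
qed

lemma Ur_eq:
  fixes a :: "'a::cnormed_vector"
  assumes r: "r > 0"
  shows "Ur r a = {V \<in> MaxA. annih V \<in> {\<V> \<in> SubDual. \<V> \<inter> Qset r a \<noteq> {}}}"
proof (intro set_eqI iffI)
  fix V assume "V \<in> Ur r a"
  then have VM: "V \<in> MaxA" and dr: "infdist a V > r" unfolding Ur_def by auto
  have cs: "csubspace V" using VM unfolding MaxA_def by simp
  have "infdist a V > 0" using dr r by simp
  from hb_dist[OF cs this] obtain \<phi> where phi: "\<phi> \<in> cdual" and pV: "\<forall>v\<in>V. \<phi> v = 0"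
    and pa: "\<phi> a = complex_of_real (infdist a V)" and pb: "\<forall>x. cmod (\<phi> x) \<le> norm x" by blast
  have "onorm \<phi> \<le> 1" by (rule onorm_bound) (use pb in simp_all)
  then have "r * onorm \<phi> \<le> r" using r by (simp add: mult_left_le)
  moreover have "cmod (\<phi> a) = infdist a V" using pa by (simp add: infdist_nonneg)
  ultimately have "\<phi> \<in> Qset r a" unfolding Qset_def using phi dr by simp
  moreover have "\<phi> \<in> annih V" unfolding annih_def using phi pV by simp
  ultimately show "V \<in> {V \<in> MaxA. annih V \<in> {\<V> \<in> SubDual. \<V> \<inter> Qset r a \<noteq> {}}}"
    using VM annih_SubDual by blast
next
  fix V assume "V \<in> {V \<in> MaxA. annih V \<in> {\<V> \<in> SubDual. \<V> \<inter> Qset r a \<noteq> {}}}"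
  then obtain \<phi> where VM: "V \<in> MaxA" and pA: "\<phi> \<in> annih V" and pQ: "\<phi> \<in> Qset r a" by blast
  have phi: "\<phi> \<in> cdual" and pV: "\<forall>v\<in>V. \<phi> v = 0" using pA unfolding annih_def by auto
  have lt: "r * onorm \<phi> < cmod (\<phi> a)" using pQ unfolding Qset_def by simp
  have bl: "bounded_linear \<phi>" by (rule cdual_bl[OF phi])
  have V0: "0 \<in> V" using VM unfolding MaxA_def csubspace_def by simp
  have on0: "onorm \<phi> \<ge> 0" by (rule onorm_pos_le[OF bl])
  have onp: "onorm \<phi> > 0"
  proof (rule ccontr)
    assume "\<not> onorm \<phi> > 0"
    then have "onorm \<phi> = 0" using on0 by simp
    moreover from this have "\<phi> a = 0" using onorm_eq_0[OF bl] by simp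
    ultimately show False using lt by simp
  qed
  define m where "m = cmod (\<phi> a) / onorm \<phi>"
  have rm: "r < m" unfolding m_def using lt onp by (simp add: pos_less_divide_eq)
  have "m \<le> infdist a V"
    unfolding infdist_def
  proof -
    have "V \<noteq> {}" using V0 by blast
    moreover have "m \<le> dist a v" if v: "v \<in> V" for v
    proof -
      have "\<phi> (a - v) = \<phi> a - \<phi> v" by (rule linear_diff[OF bounded_linear.linear[OF bl]])
      then have "\<phi> (a - v) = \<phi> a" using pV v by simp
      then have "cmod (\<phi> a) \<le> onorm \<phi> * norm (a - v)" using onorm[OF bl, of "a - v"] by simp
      then show ?thesis unfolding m_def dist_norm using onp by (simp add: pos_divide_le_eq mult.commute)
    qed
    ultimately show "m \<le> (if V = {} then 0 else INF y\<in>V. dist a y)"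
      by (simp add: cINF_greatest)
  qed
  then show "V \<in> Ur r a" unfolding Ur_def using VM rm by simp
qed

theorem lemma7p24:
  fixes W :: "'a::cnormed_vector set set"
  assumes "dist_topology_open W"
  shows "F_topology_open W"
proof -
  have "generate_topology_on (insert MaxA {Ur r a | r a. r > 0}) W"
    using assms unfolding dist_topology_open_def by simp
  then show ?thesis
  proof (induction rule: generate_topology_on.induct)
    case Empty
    have "lower_vietoris_open ({} :: ('a \<Rightarrow> complex) set set)"
      unfolding lower_vietoris_open_def by (rule generate_topology_on.Empty)
    then show ?case unfolding F_topology_open_def by (intro exI[of _ "{}"]) simp
  next
    case (Int a b)
    from Int.IH obtain U1 U2 where U1: "lower_vietoris_open U1" "a = {V \<in> MaxA. annih V \<in> U1}"
      and U2: "lower_vietoris_open U2" "b = {V \<in> MaxA. annih V \<in> U2}"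
      unfolding F_topology_open_def by blast
    have "lower_vietoris_open (U1 \<inter> U2)" using U1(1) U2(1)
      unfolding lower_vietoris_open_def by (rule generate_topology_on.Int)
    moreover have "a \<inter> b = {V \<in> MaxA. annih V \<in> U1 \<inter> U2}" using U1(2) U2(2) by blast
    ultimately show ?case unfolding F_topology_open_def by blast
  next
    case (UN K)
    have "\<forall>k\<in>K. \<exists>U. lower_vietoris_open U \<and> k = {V \<in> MaxA. annih V \<in> U}"
      using UN.IH unfolding F_topology_open_def by blast
    then obtain f where f: "\<And>k. k \<in> K \<Longrightarrow> lower_vietoris_open (f k) \<and> k = {V \<in> MaxA. annih V \<in> f k}"
      by metis
    have "lower_vietoris_open (\<Union>(f ` K))"
      unfolding lower_vietoris_open_def
      by (rule generate_topology_on.UN) (use f in \<open>auto simp: lower_vietoris_open_def\<close>)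
    moreover have "\<Union>K = {V \<in> MaxA. annih V \<in> \<Union>(f ` K)}"
    proof (intro set_eqI iffI)
      fix V assume "V \<in> \<Union>K"
      then obtain k where "k \<in> K" "V \<in> k" by blast
      then show "V \<in> {V \<in> MaxA. annih V \<in> \<Union>(f ` K)}" using f[of k] by blast
    next
      fix V assume "V \<in> {V \<in> MaxA. annih V \<in> \<Union>(f ` K)}"
      then obtain k where "k \<in> K" "V \<in> MaxA" "annih V \<in> f k" by blast
      then show "V \<in> \<Union>K" using f[of k] by blast
    qed
    ultimately show ?case unfolding F_topology_open_def by blast
  next
    case (Basis s)
    then consider "s = MaxA" | r a where "r > 0" "s = Ur r a" by blast
    then show ?case
    proof cases
      case 1
      have "lower_vietoris_open SubDual"
        unfolding lower_vietoris_open_def lower_vietoris_subbasis_def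
        by (rule generate_topology_on.Basis) simp
      moreover have "s = {V \<in> MaxA. annih V \<in> SubDual}" using 1 annih_SubDual by blast
      ultimately show ?thesis unfolding F_topology_open_def by blast
    next
      case 2
      have "lower_vietoris_open {\<V> \<in> SubDual. \<V> \<inter> Qset r a \<noteq> {}}"
        unfolding lower_vietoris_open_def lower_vietoris_subbasis_def
        by (rule generate_topology_on.Basis) (use Qset_open[OF 2(1), of a] in blast)
      moreover have "s = {V \<in> MaxA. annih V \<in> {\<V> \<in> SubDual. \<V> \<inter> Qset r a \<noteq> {}}}"
        using 2 Ur_eq by blast
      ultimately show ?thesis unfolding F_topology_open_def by blast
    qed
  qed
qed

end
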